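(* Let $V$ be a finite vocabulary. Each word $x\in V$ has a synonym set $S_x\subseteq V$ with $x\in S_x$, the synonym relation being symmetric, and a nonempty perturbation set $P_x\subseteq V$; assume $|P_x|=|P_{x'}|$ for every word $x$ and every $x'\in S_x$. Write $n_x=|P_x|$ and $n_{x,x'}=|P_x\cap P_{x'}|$. Fix $L\ge1$ and $0\le R\le L$. For $X=x_1,\ldots,x_L\in V^L$ let $S_X=\{X'\in V^L: \sum_i\mathbb{I}\{x'_i\ne x_i\}\le R,\ x'_i\in S_{x_i}\ \forall i\}$ and $\Pi_X(Z)=\prod_{i=1}^L\mathbb{I}\{z_i\in P_{x_i}\}/|P_{x_i}|$. For each word $x$ let $\tilde x^*\in\arg\min_{x'\in S_x}n_{x,x'}/n_x$. Given $X=x_1,\ldots,x_L$, order its positions as $\ell_1,\ldots,\ell_L$ so that $n_{x_{\ell_i},\tilde x^*_{\ell_i}}/n_{x_{\ell_i}}\le n_{x_{\ell_j},\tilde x^*_{\ell_j}}/n_{x_{\ell_j}}$ whenever $i\le j$ (here $\tilde x^*_k$ denotes $\widetilde{(x_k)}^*$), and define $X^*=x^*_1,\ldots,x^*_L$ by $x^*_i=\tilde x^*_i$ if $i\in\{\ell_1,\ldots,\ell_R\}$ and $x^*_i=x_i$ otherwise. Then for every $\lambda\ge0$, $$\max_{X'\in S_X}\sum_{Z\in V^L}\big(\lambda\Pi_X(Z)-\Pi_{X'}(Z)\big)_+=\sum_{Z\in V^L}\big(\lambda\Pi_X(Z)-\Pi_{X^*}(Z)\big)_+,$$ where $(s)_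+=\max(s,0)$.
   Context: $X^*\in S_X$ since it differs from $X$ in at most $R$ positions, each by a synonym. *)

theory Defs
  imports Complex_Main
begin

text \<open>Sentences of length L over the vocabulary (the finite type 'v) are lists of length L;
positions are 0-based indices i < L.\<close>

definition synonym_set :: "('v \<Rightarrow> 'v set) \<Rightarrow> nat \<Rightarrow> nat \<Rightarrow> 'v list \<Rightarrow> 'v list set" where
  "synonym_set S L R X =
     {X'. length X' = L \<and> card {i. i < L \<and> X' ! i \<noteq> X ! i} \<le> R
          \<and> (\<forall>i<L. X' ! i \<in> S (X ! i))}"

definition Pi_dist :: "('v \<Rightarrow> 'v set) \<Rightarrow> nat \<Rightarrow> 'v list \<Rightarrow> 'v list \<Rightarrow> real" where
  "Pi_dist P L X Z =
     (\<Prod>i<L. (if Z ! i \<in> P (X ! i) then 1 else 0) / real (card (P (X ! i))))"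

definition overlap_ratio :: "('v \<Rightarrow> 'v set) \<Rightarrow> 'v \<Rightarrow> 'v \<Rightarrow> real" where
  "overlap_ratio P x x' = real (card (P x \<inter> P x')) / real (card (P x))"

definition pos_part :: "real \<Rightarrow> real" where
  "pos_part s = max s 0"

end

theory Submission
  imports Defs
begin

lemma sum_lists_prod:
  fixes f :: "nat \<Rightarrow> 'v::finite \<Rightarrow> real"
  shows "(\<Sum>Z\<in>{Z::'v list. length Z = L}. \<Prod>i<L. f i (Z!i)) = (\<Prod>i<L. \<Sum>v\<in>UNIV. f i v)"
proof (induction L arbitrary: f)
  case 0
  have "{Z::'v list. length Z = 0} = {[]}" by auto
  then show ?case by simp
next
  case (Suc L)
  have eq: "{Z::'v list. length Z = Suc L} = (\<lambda>(a,Z). a#Z) ` (UNIV \<times> {Z. length Z = L})"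
  proof (rule set_eqI)
    fix Z :: "'v list"
    show "Z \<in> {Z. length Z = Suc L} \<longleftrightarrow> Z \<in> (\<lambda>(a,Z). a#Z) ` (UNIV \<times> {Z. length Z = L})"
      by (cases Z) auto
  qed
  have inj: "inj_on (\<lambda>(a,Z). a#Z) (UNIV \<times> {Z::'v list. length Z = L})"
    by (auto simp: inj_on_def)
  have "(\<Sum>Z\<in>{Z::'v list. length Z = Suc L}. \<Prod>i<Suc L. f i (Z!i))
      = (\<Sum>(a,Z)\<in>UNIV \<times> {Z::'v list. length Z = L}. \<Prod>i<Suc L. f i ((a#Z)!i))"
    unfolding eq by (subst sum.reindex[OF inj]) (simp add: case_prod_unfold)
  also have "\<dots> = (\<Sum>a\<in>UNIV. \<Sum>Z\<in>{Z::'v list. length Z = L}. f 0 a * (\<Prod>i<L. f (Suc i) (Z!i)))"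
    by (subst sum.cartesian_product[symmetric]) (simp only: prod.lessThan_Suc_shift, simp)
  also have "\<dots> = (\<Sum>a\<in>UNIV. f 0 a * (\<Prod>i<L. \<Sum>v\<in>UNIV. f (Suc i) v))"
    by (simp add: sum_distrib_left[symmetric] Suc.IH[of "\<lambda>i. f (Suc i)"])
  also have "\<dots> = (\<Prod>i<Suc L. \<Sum>v\<in>UNIV. f i v)"
    by (simp only: prod.lessThan_Suc_shift sum_distrib_right)
  finally show ?case .
qed

lemma card_pos: "A \<noteq> {} \<Longrightarrow> card (A :: 'v::finite set) > 0"
  by (simp add: card_gt_0_iff)

lemma sum_ind: "(\<Sum>v\<in>(UNIV::'v::finite set). (if v \<in> A then 1 else 0) / c) = real (card A) / c"
proof -
  have "(\<Sum>v\<in>(UNIV::'v set). (if v \<in> A then 1 else 0) / c) = (\<Sum>v\<in>(UNIV::'v set). (if v \<in> A then 1 else 0)) / c"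
    by (simp add: sum_divide_distrib)
  also have "(\<Sum>v\<in>(UNIV::'v set). (if v \<in> A then 1 else (0::real))) = real (card A)"
    by (simp add: sum.If_cases Int_def)
  finally show ?thesis .
qed

lemma pointwise:
  fixes P :: "'v::finite \<Rightarrow> 'v set"
  assumes P_ne: "\<And>x. P x \<noteq> {}"
    and hc: "\<And>i. i < L \<Longrightarrow> card (P (Y!i)) = card (P (X!i))"
    and lam: "lam \<ge> 0"
  shows "pos_part (lam * Pi_dist P L X Z - Pi_dist P L Y Z)
    = lam * Pi_dist P L X Z - min lam 1 * (\<Prod>i<L. (if Z!i \<in> P (X!i) \<inter> P (Y!i) then 1 else 0) / real (card (P (X!i))))"
proof (cases "\<forall>i<L. Z!i \<in> P (X!i)")
  case True
  define c where "c = (\<Prod>i<L. 1 / real (card (P (X!i))))"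
  have cpos: "c > 0" unfolding c_def using card_pos[OF P_ne] by (intro prod_pos) auto
  have PX: "Pi_dist P L X Z = c" unfolding Pi_dist_def c_def using True by (intro prod.cong) auto
  show ?thesis
  proof (cases "\<forall>i<L. Z!i \<in> P (Y!i)")
    case True2: True
    have PY: "Pi_dist P L Y Z = c" unfolding Pi_dist_def c_def using True2 hc by (intro prod.cong) auto
    have G: "(\<Prod>i<L. (if Z!i \<in> P (X!i) \<inter> P (Y!i) then 1 else 0) / real (card (P (X!i)))) = c"
      unfolding c_def using True True2 by (intro prod.cong) auto
    show ?thesis unfolding PX PY G pos_part_def using cpos
      by (cases "lam \<ge> 1") (auto simp: max_def min_def algebra_simps mult_le_cancel_right1 mult_le_cancel_right2)
  next
    case False
    then obtain i where i: "i < L" "Z!i \<notin> P (Y!i)" by auto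
    have PY: "Pi_dist P L Y Z = 0" unfolding Pi_dist_def using i by (intro prod_zero) auto
    have G: "(\<Prod>i<L. (if Z!i \<in> P (X!i) \<inter> P (Y!i) then 1 else 0) / real (card (P (X!i)))) = 0"
      using i by (intro prod_zero) auto
    show ?thesis unfolding PX PY G pos_part_def using cpos lam by auto
  qed
next
  case False
  then obtain i where i: "i < L" "Z!i \<notin> P (X!i)" by auto
  have PX: "Pi_dist P L X Z = 0" unfolding Pi_dist_def using i by (intro prod_zero) auto
  have G: "(\<Prod>i<L. (if Z!i \<in> P (X!i) \<inter> P (Y!i) then 1 else 0) / real (card (P (X!i)))) = 0"
    using i by (intro prod_zero) auto
  have "Pi_dist P L Y Z \<ge> 0" unfolding Pi_dist_def by (intro prod_nonneg) auto
  then show ?thesis unfolding PX G pos_part_def by auto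
qed

lemma value_eq:
  fixes P :: "'v::finite \<Rightarrow> 'v set"
  assumes P_ne: "\<And>x. P x \<noteq> {}"
    and hc: "\<And>i. i < L \<Longrightarrow> card (P (Y!i)) = card (P (X!i))"
    and lam: "lam \<ge> 0"
  shows "(\<Sum>Z\<in>{Z. length Z = L}. pos_part (lam * Pi_dist P L X Z - Pi_dist P L Y Z))
     = lam - min lam 1 * (\<Prod>i<L. overlap_ratio P (X!i) (Y!i))"
proof -
  have "(\<Sum>Z\<in>{Z. length Z = L}. pos_part (lam * Pi_dist P L X Z - Pi_dist P L Y Z))
     = (\<Sum>Z\<in>{Z. length Z = L}. lam * Pi_dist P L X Z - min lam 1 * (\<Prod>i<L. (if Z!i \<in> P (X!i) \<inter> P (Y!i) then 1 else 0) / real (card (P (X!i)))))"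
    by (intro sum.cong refl pointwise[OF P_ne hc lam])
  also have "\<dots> = lam * (\<Sum>Z\<in>{Z. length Z = L}. Pi_dist P L X Z) - min lam 1 * (\<Sum>Z\<in>{Z. length Z = L}. (\<Prod>i<L. (if Z!i \<in> P (X!i) \<inter> P (Y!i) then 1 else 0) / real (card (P (X!i)))))"
    by (simp add: sum_subtractf sum_distrib_left)
  also have "(\<Sum>Z\<in>{Z. length Z = L}. Pi_dist P L X Z) = 1"
    unfolding Pi_dist_def
    using sum_lists_prod[of "\<lambda>i v. (if v \<in> P (X!i) then 1 else 0) / real (card (P (X!i)))" L]
      card_pos[OF P_ne] by (simp add: sum_ind P_ne)
  also have "(\<Sum>Z\<in>{Z. length Z = L}. (\<Prod>i<L. (if Z!i \<in> P (X!i) \<inter> P (Y!i) then 1 else 0) / real (card (P (X!i)))))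
      = (\<Prod>i<L. overlap_ratio P (X!i) (Y!i))"
    using sum_lists_prod[of "\<lambda>i v. (if v \<in> P (X!i) \<inter> P (Y!i) then 1 else 0) / real (card (P (X!i)))" L]
    unfolding overlap_ratio_def sum_ind by assumption
  finally show ?thesis by simp
qed

lemma exchange:
  fixes m :: "nat \<Rightarrow> real"
  assumes "finite U" "E \<subseteq> U"
    and "\<And>i j. i \<in> E \<Longrightarrow> j \<in> U - E \<Longrightarrow> m i \<le> m j"
    and "\<And>i. i \<in> U \<Longrightarrow> 0 \<le> m i \<and> m i \<le> 1"
  shows "D \<subseteq> U \<Longrightarrow> card D \<le> card E \<Longrightarrow> prod m E \<le> prod m D"
proof (induction "card (D - E)" arbitrary: D rule: less_induct)
  case less
  have fD: "finite D" "finite E" using less.prems assms finite_subset by blast+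
  show ?case
  proof (cases "D \<subseteq> E")
    case True
    have "prod m E = prod m D * prod m (E - D)"
      using prod.subset_diff[OF True fD(2)] by (simp add: mult.commute)
    also have "\<dots> \<le> prod m D * 1"
      using assms(2,4) less.prems True
      by (intro mult_left_mono prod_le_1 prod_nonneg) (simp add: subset_iff; fail)+
    finally show ?thesis by simp
  next
    case False
    then obtain j where j: "j \<in> D" "j \<notin> E" by auto
    have "card D = card (D \<inter> E) + card (D - E)"
      by (rule card_Int_Diff[OF fD(1)])
    moreover have "card (D - E) > 0" using j fD(1) by (auto simp: card_gt_0_iff)
    ultimately have "card (D \<inter> E) < card E" using less.prems by linarith
    have "\<not> E \<subseteq> D \<inter> E"
    proof
      assume "E \<subseteq> D \<inter> E"
      then have "card E \<le> card (D \<inter> E)" using card_mono[of "D \<inter> E" E] fD by simp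
      then show False using \<open>card (D \<inter> E) < card E\<close> by simp
    qed
    then obtain t where t: "t \<in> E" "t \<notin> D" by auto
    define D2 where "D2 = insert t (D - {j})"
    have tj: "t \<noteq> j" using t j by auto
    have "card D > 0" using j fD by (auto simp: card_gt_0_iff)
    then have cD2: "card D2 = card D" unfolding D2_def using fD t j
      by (simp add: card_Diff_singleton)
    have sub: "D2 \<subseteq> U" unfolding D2_def using t less.prems assms by auto
    have "D2 - E = (D - E) - {j}" unfolding D2_def using t by auto
    then have lt: "card (D2 - E) < card (D - E)" using j fD \<open>card (D - E) > 0\<close> by simp
    have IH: "prod m E \<le> prod m D2"
      using less.hyps[OF lt sub] cD2 less.prems by simp
    have p0: "0 \<le> prod m (D - {j})" using assms less.prems by (intro prod_nonneg) auto
    have "prod m D2 = m t * prod m (D - {j})" unfolding D2_def using fD t by simp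
    also have "\<dots> \<le> m j * prod m (D - {j})"
      using assms(3)[of t j] t j less.prems p0 by (intro mult_right_mono) auto
    also have "\<dots> = prod m D" using fD j by (simp add: prod.remove)
    finally show ?thesis using IH by simp
  qed
qed

theorem lemma3:
  fixes S P :: "'v::finite \<Rightarrow> 'v set"
    and L R :: nat
    and X :: "'v list"
    and tx :: "'v \<Rightarrow> 'v"
    and ell :: "nat \<Rightarrow> nat"
    and lam :: real
  assumes S_refl: "\<And>x. x \<in> S x"
    and S_sym: "\<And>x x'. x' \<in> S x \<Longrightarrow> x \<in> S x'"
    and P_ne: "\<And>x. P x \<noteq> {}"
    and P_card: "\<And>x x'. x' \<in> S x \<Longrightarrow> card (P x) = card (P x')"
    and L_pos: "L \<ge> 1"
    and R_le: "R \<le> L"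
    and X_len: "length X = L"
    and tx_mem: "\<And>x. tx x \<in> S x"
    and tx_min: "\<And>x x'. x' \<in> S x \<Longrightarrow> overlap_ratio P x (tx x) \<le> overlap_ratio P x x'"
    and ell_bij: "bij_betw ell {..<L} {..<L}"
    and ell_sorted: "\<And>i j. i \<le> j \<Longrightarrow> j < L \<Longrightarrow>
        overlap_ratio P (X ! ell i) (tx (X ! ell i)) \<le> overlap_ratio P (X ! ell j) (tx (X ! ell j))"
    and lam_nonneg: "lam \<ge> 0"
  shows "Max ((\<lambda>X'. \<Sum>Z\<in>{Z. length Z = L}. pos_part (lam * Pi_dist P L X Z - Pi_dist P L X' Z))
               ` synonym_set S L R X)
       = (\<Sum>Z\<in>{Z. length Z = L}. pos_part (lam * Pi_dist P L X Z
             - Pi_dist P L (map (\<lambda>i. if i \<in> ell ` {..<R} then tx (X ! i) else X ! i) [0..<L]) Z))"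
proof -
  define m where "m i = overlap_ratio P (X!i) (tx (X!i))" for i
  define E where "E = ell ` {..<R}"
  define Xs where "Xs = map (\<lambda>i. if i \<in> ell ` {..<R} then tx (X ! i) else X ! i) [0..<L]"
  define val where "val Y = (\<Sum>Z\<in>{Z. length Z = L}. pos_part (lam * Pi_dist P L X Z - Pi_dist P L Y Z))" for Y
  have cpos: "card (P x) > 0" for x using card_pos[OF P_ne] .
  have ov_nn: "0 \<le> overlap_ratio P x y" for x y unfolding overlap_ratio_def by simp
  have ov_le1: "overlap_ratio P x y \<le> 1" for x y
  proof -
    have "card (P x \<inter> P y) \<le> card (P x)" by (simp add: card_mono)
    then show ?thesis unfolding overlap_ratio_def using cpos[of x] P_ne by simp
  qed
  have ov_self: "overlap_ratio P x x = 1" for x unfolding overlap_ratio_def using cpos[of x] P_ne by simp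
  have Xs_nth: "Xs ! i = (if i \<in> E then tx (X!i) else X!i)" if "i < L" for i
    unfolding Xs_def E_def using that by simp
  have Xs_len: "length Xs = L" unfolding Xs_def by simp
  have inj: "inj_on ell {..<R}"
    by (rule inj_on_subset[OF bij_betw_imp_inj_on[OF ell_bij]]) (simp add: R_le)
  have cardE: "card E = R" unfolding E_def using card_image[OF inj] by simp
  have EL: "E \<subseteq> {..<L}" unfolding E_def
    using image_mono[of "{..<R}" "{..<L}" ell] bij_betw_imp_surj_on[OF ell_bij] R_le by simp
  have ord: "m i \<le> m j" if iE: "i \<in> E" and jE: "j \<in> {..<L} - E" for i j
  proof -
    obtain a where a: "a < R" "i = ell a" using iE unfolding E_def by blast
    have "j \<in> ell ` {..<L}" using jE bij_betw_imp_surj_on[OF ell_bij] by auto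
    then obtain b where b: "b < L" "j = ell b" by blast
    have "b \<ge> R"
    proof (rule ccontr)
      assume "\<not> R \<le> b"
      then have "j \<in> E" unfolding E_def b by auto
      then show False using jE by auto
    qed
    then show ?thesis unfolding m_def a b using ell_sorted[of a b] b a by simp
  qed
  have Xs_in: "Xs \<in> synonym_set S L R X"
  proof -
    have "{i. i < L \<and> Xs ! i \<noteq> X ! i} \<subseteq> E" using Xs_nth by (auto split: if_splits)
    then have "card {i. i < L \<and> Xs ! i \<noteq> X ! i} \<le> R"
      using card_mono[OF finite_subset[OF EL finite_lessThan]] cardE by simp
    moreover have "\<forall>i<L. Xs ! i \<in> S (X ! i)" using Xs_nth tx_mem S_refl by simp
    ultimately show ?thesis unfolding synonym_set_def using Xs_len by simp
  qed
  have val_eq: "val Y = lam - min lam 1 * (\<Prod>i<L. overlap_ratio P (X!i) (Y!i))"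
    if "Y \<in> synonym_set S L R X" for Y
  proof -
    have "card (P (Y!i)) = card (P (X!i))" if "i < L" for i
    proof -
      have "Y!i \<in> S (X!i)" using \<open>Y \<in> synonym_set S L R X\<close> that unfolding synonym_set_def by auto
      then show ?thesis using P_card[of "Y!i" "X!i"] by simp
    qed
    then show ?thesis unfolding val_def by (intro value_eq[OF P_ne _ lam_nonneg])
  qed
  have prodXs: "(\<Prod>i<L. overlap_ratio P (X!i) (Xs!i)) = prod m E"
  proof -
    have "(\<Prod>i<L. overlap_ratio P (X!i) (Xs!i)) = (\<Prod>i<L. if i \<in> E then m i else 1)"
      by (intro prod.cong refl) (simp add: Xs_nth m_def ov_self)
    also have "\<dots> = prod m E" using EL by (simp add: prod.If_cases Int_absorb1)
    finally show ?thesis .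
  qed
  have bound: "val Y \<le> val Xs" if Y: "Y \<in> synonym_set S L R X" for Y
  proof -
    define D where "D = {i. i < L \<and> Y ! i \<noteq> X ! i}"
    have Ysyn: "\<forall>i<L. Y ! i \<in> S (X ! i)" and cD: "card D \<le> R"
      using Y unfolding synonym_set_def D_def by auto
    have DL: "D \<subseteq> {..<L}" unfolding D_def by auto
    have "prod m E \<le> prod m D"
      using exchange[of "{..<L}" E m D] EL ord cD cardE DL ov_nn ov_le1 unfolding m_def by auto
    also have "prod m D = (\<Prod>i<L. if i \<in> D then m i else 1)"
      using DL by (simp add: prod.If_cases Int_absorb1)
    also have "\<dots> \<le> (\<Prod>i<L. overlap_ratio P (X!i) (Y!i))"
    proof (intro prod_mono conjI)
      fix i assume i: "i \<in> {..<L}"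
      show "0 \<le> (if i \<in> D then m i else 1)" using ov_nn unfolding m_def by simp
      show "(if i \<in> D then m i else 1) \<le> overlap_ratio P (X!i) (Y!i)"
        using i Ysyn tx_min ov_self unfolding D_def m_def by auto
    qed
    finally have "prod m E \<le> (\<Prod>i<L. overlap_ratio P (X!i) (Y!i))" .
    then have "min lam 1 * prod m E \<le> min lam 1 * (\<Prod>i<L. overlap_ratio P (X!i) (Y!i))"
      using lam_nonneg by (intro mult_left_mono) auto
    then show ?thesis using val_eq[OF Y] val_eq[OF Xs_in] prodXs by simp
  qed
  have "synonym_set S L R X \<subseteq> {Z. length Z = L}" unfolding synonym_set_def by auto
  moreover have "finite {Z::'v list. length Z = L}" using finite_lists_length_eq[of "UNIV::'v set" L] by simp
  ultimately have fin: "finite (synonym_set S L R X)" by (rule finite_subset)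
  have "Max (val ` synonym_set S L R X) = val Xs"
    using fin Xs_in bound by (intro Max_eqI) auto
  then show ?thesis unfolding val_def Xs_def .
qed

end
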